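(* Let $q$ be a power of a prime $p$ and let $n\ge 2$ be an integer such that every prime divisor of $n$ divides $p(q-1)$. Then $n$ is $\mathbb{F}_q$-practical.
   Context: A positive integer $n$ is $\mathbb{F}_q$-practical if for every integer $1\le k\le n-1$ the polynomial $x^n-1$ has a divisor of degree $k$ in $\mathbb{F}_q[x]$. *)

theory Defs
  imports "HOL-Computational_Algebra.Computational_Algebra"
begin

text \<open>A positive integer n is F_q-practical, where the finite field F_q is represented
  by a finite field type 'a with CARD('a) = q: for every 1 <= k <= n-1 the polynomial
  x^n - 1 has a divisor of degree k in 'a[x].\<close>
definition Fq_practical :: "'a::{field,finite} itself \<Rightarrow> nat \<Rightarrow> bool" where
  "Fq_practical _ n \<longleftrightarrow> n > 0 \<and>
     (\<forall>k. 1 \<le> k \<and> k \<le> n - 1 \<longrightarrow>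
        (\<exists>f :: 'a poly. degree f = k \<and> f dvd (monom 1 n - 1)))"

end

theory Submission
  imports Defs "HOL-Number_Theory.Residues"
begin

lemma prod_roots_dvd:
  fixes P :: "'a::field poly"
  assumes "finite S" "\<forall>c\<in>S. poly P c = 0"
  shows "(\<Prod>c\<in>S. [:-c,1:]) dvd P"
  using assms
proof (induction S arbitrary: P rule: finite_induct)
  case empty
  then show ?case by simp
next
  case (insert c S)
  then have "[:-c,1:] dvd P" using poly_eq_0_iff_dvd by blast
  then obtain P' where P: "P = [:-c,1:] * P'" by (elim dvdE)
  have "\<forall>d\<in>S. poly P' d = 0"
  proof
    fix d assume "d \<in> S"
    then have "d \<noteq> c" using insert by auto
    moreover have "poly P d = 0" using insert \<open>d\<in>S\<close> by auto
    ultimately show "poly P' d = 0" using P by simp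
  qed
  then have "(\<Prod>c\<in>S. [:-c,1:]) dvd P'" using insert.IH by blast
  then have "[:-c,1:] * (\<Prod>c\<in>S. [:-c,1:]) dvd [:-c,1:] * P'" by (rule mult_dvd_mono[OF dvd_refl])
  moreover have "(\<Prod>c\<in>insert c S. [:-c,1:]) = [:-c,1:] * (\<Prod>c\<in>S. [:-c,1:])"
    using insert(1,2) by (rule prod.insert)
  ultimately show ?case using P by metis
qed

lemma fermat_ff:
  fixes x :: "'a::{field,finite}"
  assumes "x \<noteq> 0"
  shows "x ^ (card (UNIV::'a set) - 1) = 1"
proof -
  have fin: "finite (UNIV - {0::'a})" by simp
  have "(\<Prod>y\<in>UNIV-{0}. x*y) = x ^ card (UNIV - {0::'a}) * (\<Prod>y\<in>UNIV-{0}. y)"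
    by (simp add: prod.distrib)
  also have "card (UNIV - {0::'a}) = card (UNIV::'a set) - 1"
    by (simp add: card_Diff_singleton)
  also have "(\<Prod>y\<in>UNIV-{0}. x*y) = (\<Prod>y\<in>UNIV-{0::'a}. y)"
    by (rule prod.reindex_bij_witness[of _ "\<lambda>y. y / x" "\<lambda>y. x * y"]) (use assms in auto)
  finally have "1 * (\<Prod>y\<in>UNIV-{0::'a}. y) = x ^ (card (UNIV::'a set) - 1) * (\<Prod>y\<in>UNIV-{0::'a}. y)"
    by simp
  moreover have "(\<Prod>y\<in>UNIV-{0::'a}. y) \<noteq> 0" by simp
  ultimately show ?thesis by (metis mult_right_cancel)
qed

lemma degree_Y:
  assumes "n \<ge> 1"
  shows "degree (Polynomial.monom (1::'a::field) n - [:c:]) = n"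
proof -
  have "degree (Polynomial.monom (1::'a) n + - [:c:]) = n"
    using assms by (subst degree_add_eq_left) (auto simp: degree_monom_eq)
  then show ?thesis by (simp only: diff_conv_add_uminus)
qed

lemma degree_prodY:
  assumes "n \<ge> 1"
  shows "degree (\<Prod>c\<in>#N. Polynomial.monom (1::'a::field) n - [:c:]) = n * size N
    \<and> (\<Prod>c\<in>#N. Polynomial.monom (1::'a::field) n - [:c:]) \<noteq> 0"
proof (induction N)
  case empty
  then show ?case by simp
next
  case (add x N)
  have d: "degree (Polynomial.monom (1::'a) n - [:x:]) = n" using degree_Y assms by blast
  then have nz: "Polynomial.monom (1::'a) n - [:x:] \<noteq> 0" using assms by auto
  show ?case using add nz d by (simp add: degree_mult_eq)
qed

lemma pcompose_power: "pcompose (p ^ k) q = (pcompose p q) ^ k"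
  by (induction k) (simp_all add: pcompose_mult pcompose_1)

lemma pcompose_prod_mset:
  "pcompose (\<Prod>c\<in>#M. f c) q = (\<Prod>c\<in>#M. pcompose (f c) q)"
  by (induction M) (simp_all add: pcompose_mult pcompose_1)

lemma sub_mset_size:
  assumes "k \<le> size M"
  shows "\<exists>N. N \<subseteq># M \<and> size N = k"
  using assms
proof (induction M arbitrary: k)
  case empty
  then show ?case by simp
next
  case (add x M)
  show ?case
  proof (cases k)
    case 0
    then show ?thesis by (intro exI[of _ "{#}"]) simp
  next
    case (Suc k')
    then obtain N where "N \<subseteq># M" "size N = k'" using add by force
    then show ?thesis using Suc by (intro exI[of _ "add_mset x N"]) simp
  qed
qed

lemma step:
  fixes M :: "'a::{field,finite} multiset"
  assumes r: "r \<ge> 1" and sz: "size M = r" and one: "1 \<in># M"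
    and split: "Polynomial.monom 1 r - 1 = (\<Prod>c\<in>#M. [:-c,1:])"
    and prac: "Fq_practical TYPE('a) n"
  shows "Fq_practical TYPE('a) (r*n)"
proof -
  define Y :: "'a poly" where "Y = Polynomial.monom 1 n"
  have n: "n \<ge> 1" using prac by (simp add: Fq_practical_def)
  have "pcompose (Polynomial.monom 1 r - 1) Y = pcompose (\<Prod>c\<in>#M. [:-c,1:]) Y" using split by simp
  moreover have "pcompose (Polynomial.monom 1 r - 1) Y = Polynomial.monom 1 (r*n) - 1"
  proof -
    have "Polynomial.monom (1::'a) r = [:0,1:] ^ r" by (simp add: monom_altdef)
    then show ?thesis
      by (simp add: pcompose_diff pcompose_1 pcompose_power pcompose_pCons Y_def monom_power mult.commute)
  qed
  moreover have "pcompose (\<Prod>c\<in>#M. [:-c,1:]) Y = (\<Prod>c\<in>#M. Y - [:c:])"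
  proof -
    have "\<And>c. [:-c:] + Y = Y - [:c:]" by (simp add: diff_conv_add_uminus add.commute)
    then have h: "(\<lambda>c. [:-c:] + Y) = (\<lambda>c. Y - [:c:])" by auto
    show ?thesis by (simp add: pcompose_prod_mset pcompose_pCons h)
  qed
  ultimately have eq: "Polynomial.monom 1 (r*n) - 1 = (\<Prod>c\<in>#M. Y - [:c:])" by simp
  obtain M' where M: "M = add_mset 1 M'" using one by (metis multi_member_split)
  show ?thesis unfolding Fq_practical_def
  proof (intro conjI allI impI)
    show "r * n > 0" using r n by simp
  next
    fix k assume k: "1 \<le> k \<and> k \<le> r * n - 1"
    define a where "a = k div n"
    define b where "b = k mod n"
    have kab: "k = n * a + b" unfolding a_def b_def by simp
    have "a < r"
    proof (rule ccontr)
      assume "\<not> a < r"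
      then have h1: "n * r \<le> n * a" by simp
      have h2: "n * a \<le> k" using kab by simp
      have h3: "r * n \<ge> 1" using r n by simp
      have h4: "n * r = r * n" by simp
      show False using h1 h2 h3 h4 k by linarith
    qed
    then have "a \<le> size M'" using sz M by simp
    then obtain N where N: "N \<subseteq># M'" "size N = a" using sub_mset_size by blast
    have "b < n" unfolding b_def using n by simp
    obtain g :: "'a poly" where g: "degree g = b" "g dvd Y - 1"
    proof (cases "b = 0")
      case True
      then show ?thesis using that[of 1] by simp
    next
      case False
      then have "1 \<le> b \<and> b \<le> n - 1" using \<open>b < n\<close> by simp
      then obtain f :: "'a poly" where "degree f = b" "f dvd Polynomial.monom 1 n - 1"
        using prac unfolding Fq_practical_def by blast
      then show ?thesis using that unfolding Y_def by blast
    qed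
    have Yne: "Y - 1 \<noteq> 0"
    proof
      assume "Y - 1 = 0"
      then have "degree (Y - [:1:]) = 0" by (simp add: one_pCons[symmetric])
      then show False using degree_Y[OF n, where c="1::'a"] n unfolding Y_def by linarith
    qed
    then have gne: "g \<noteq> 0" using g by auto
    have PN: "degree (\<Prod>c\<in>#N. Y - [:c:]) = n * a" "(\<Prod>c\<in>#N. Y - [:c:]) \<noteq> 0"
      using degree_prodY[OF n, of N] N unfolding Y_def by auto
    have "degree ((\<Prod>c\<in>#N. Y - [:c:]) * g) = k"
      using PN gne g kab by (simp add: degree_mult_eq)
    moreover have "(\<Prod>c\<in>#N. Y - [:c:]) * g dvd Polynomial.monom 1 (r*n) - 1"
    proof -
      have "(\<Prod>c\<in>#N. Y - [:c:]) dvd (\<Prod>c\<in>#M'. Y - [:c:])"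
        by (rule prod_mset_subset_imp_dvd) (use N in \<open>simp add: image_mset_subseteq_mono\<close>)
      moreover have "g dvd Y - [:1:]" using g by (simp add: one_pCons[symmetric])
      ultimately have "(\<Prod>c\<in>#N. Y - [:c:]) * g dvd (\<Prod>c\<in>#M'. Y - [:c:]) * (Y - [:1:])"
        by (rule mult_dvd_mono)
      then show ?thesis using eq M by (simp add: mult.commute)
    qed
    ultimately show "\<exists>f :: 'a poly. degree f = k \<and> f dvd Polynomial.monom 1 (r*n) - 1" by blast
  qed
qed


lemma char_prime: "prime CHAR('a::{field,finite})"
proof -
  have "CHAR('a) > 0" by (rule finite_imp_CHAR_pos) simp
  then show ?thesis by (rule prime_CHAR_semidom)
qed

lemma split_char:
  assumes "CHAR('a::{field,finite}) = r"
  shows "\<exists>M::'a multiset. size M = r \<and> 1 \<in># M \<and> Polynomial.monom 1 r - 1 = (\<Prod>c\<in>#M. [:-c,1:])"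
proof -
  have pr: "prime r" using char_prime[where ?'a='a] assms by simp
  then have r1: "r \<ge> 1" using prime_gt_0_nat by (simp add: Suc_leI)
  have c: "CHAR('a poly) = r" using assms semiring_char_poly[where ?'a='a] by simp
  have e1: "([:0,1:] + (-1::'a poly)) ^ r = [:0,1:] ^ r + (-1) ^ r"
    by (rule freshmans_dream) (use c pr in auto)
  have e2: "(-1::'a poly) ^ r = - (1 ^ r)"
    by (rule minus_power_prime_CHAR) (use c pr in auto)
  have e3: "([:0,1:] :: 'a poly) ^ r = Polynomial.monom 1 r" by (simp add: monom_altdef)
  have e4: "[:0,1:] + (-1::'a poly) = [:-1,1:]" by (simp add: one_pCons)
  have E: "Polynomial.monom 1 r - 1 = ([:-1,1:] :: 'a poly) ^ r"
    using e1 e2 e3 e4 by (simp only: power_one diff_conv_add_uminus)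
  show ?thesis
  proof (intro exI[of _ "replicate_mset r 1"] conjI)
    show "size (replicate_mset r (1::'a)) = r" by simp
    show "(1::'a) \<in># replicate_mset r 1" using r1 by simp
    show "Polynomial.monom 1 r - 1 = (\<Prod>c\<in>#replicate_mset r (1::'a). [:-c,1:])"
      unfolding E by simp
  qed
qed

lemma split_dvd:
  assumes r1: "r \<ge> 1" and rd: "r dvd card (UNIV::'a::{field,finite} set) - 1"
  shows "\<exists>M::'a multiset. size M = r \<and> 1 \<in># M \<and> Polynomial.monom 1 r - 1 = (\<Prod>c\<in>#M. [:-c,1:])"
proof -
  define Q where "Q = card (UNIV::'a set)"
  have "card {0::'a, 1} \<le> Q" unfolding Q_def by (rule card_mono) auto
  then have Q2: "Q \<ge> 2" by simp
  obtain s where qs: "Q - 1 = r * s" using rd unfolding Q_def by (elim dvdE)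
  have s1: "s \<ge> 1" using qs Q2 by (cases s) auto
  define P :: "'a poly" where "P = Polynomial.monom 1 r - 1"
  have dP: "degree P = r"
  proof -
    have "degree (Polynomial.monom (1::'a) r + - [:1:]) = r"
      using r1 by (subst degree_add_eq_left) (auto simp: degree_monom_eq)
    then show ?thesis unfolding P_def by (simp add: one_pCons diff_conv_add_uminus)
  qed
  then have Pne: "P \<noteq> 0" using r1 by auto
  define S where "S = {c. poly P c = 0}"
  have finS: "finite S" unfolding S_def using Pne by (rule poly_roots_finite)
  have cS: "card S \<le> r" unfolding S_def using card_poly_roots_bound[OF Pne] dP by simp
  have S_iff: "c \<in> S \<longleftrightarrow> c ^ r = 1" for c
    unfolding S_def P_def by (simp add: poly_monom)
  define T :: "'a poly" where "T = (\<Sum>i<s. Polynomial.monom 1 (r*i))"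
  have "Polynomial.coeff T 0 = (\<Sum>i<s. if i = 0 then 1 else 0)"
    unfolding T_def using r1 by (simp add: coeff_sum coeff_monom)
  also have "\<dots> = 1" using s1 by (simp add: sum.delta)
  finally have Tne: "T \<noteq> 0" by auto
  have dT: "degree T \<le> r * (s - 1)"
    unfolding T_def by (rule degree_sum_le) (auto simp: degree_monom_eq)
  define R where "R = {c. poly T c = 0}"
  have finR: "finite R" unfolding R_def using Tne by (rule poly_roots_finite)
  have cR: "card R \<le> r * (s - 1)" unfolding R_def using card_poly_roots_bound[OF Tne] dT by simp
  have sub: "UNIV - {0} \<subseteq> S \<union> R"
  proof
    fix c :: 'a assume "c \<in> UNIV - {0}"
    then have "c ^ (Q - 1) = 1" unfolding Q_def using fermat_ff by blast
    then have "(c ^ r) ^ s - 1 = 0" using qs by (simp add: power_mult)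
    then have "(c ^ r - 1) * (\<Sum>i<s. (c ^ r) ^ i) = 0" by (simp add: power_diff_1_eq)
    moreover have "poly T c = (\<Sum>i<s. (c ^ r) ^ i)"
      unfolding T_def by (simp add: poly_sum poly_monom power_mult)
    ultimately show "c \<in> S \<union> R" unfolding R_def using S_iff by auto
  qed
  have "Q - 1 = card (UNIV - {0::'a})" unfolding Q_def by (simp add: card_Diff_singleton)
  also have "\<dots> \<le> card (S \<union> R)" using sub finS finR by (intro card_mono) auto
  also have "\<dots> \<le> card S + card R" by (rule card_Un_le)
  finally have "r * s \<le> card S + r * (s - 1)" using qs cR by linarith
  moreover have "r * s = r * (s - 1) + r" using s1 by (cases s) auto
  ultimately have cardS: "card S = r" using cS by linarith
  have "(\<Prod>c\<in>S. [:-c,1:]) dvd P" using prod_roots_dvd[OF finS] unfolding S_def by blast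
  then obtain g where Pg: "P = (\<Prod>c\<in>S. [:-c,1:]) * g" by (elim dvdE)
  have Dne: "(\<Prod>c\<in>S. [:-c,1:]) \<noteq> (0::'a poly)" using finS by simp
  have dD: "degree (\<Prod>c\<in>S. [:-c,1:]) = r"
    using cardS by (subst degree_prod_sum_eq) auto
  have lD: "lead_coeff (\<Prod>c\<in>S. [:-c,1:]) = (1::'a)" by (simp add: lead_coeff_prod)
  have gne: "g \<noteq> 0" using Pg Pne by auto
  have "degree P = degree (\<Prod>c\<in>S. [:-c,1:]) + degree g" using Pg Dne gne by (simp add: degree_mult_eq)
  then have dg: "degree g = 0" using dP dD by simp
  have c1: "Polynomial.coeff (1::'a poly) r = 0" using r1 by (simp add: coeff_eq_0)
  have "lead_coeff P = 1" using dP c1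
    by (simp add: P_def coeff_monom)
  moreover have "lead_coeff P = lead_coeff g" using Pg lD by (simp add: lead_coeff_mult)
  ultimately have "lead_coeff g = 1" by simp
  then have "g = 1" using dg
  proof -
    assume l: "lead_coeff g = 1" and d: "degree g = 0"
    show "g = 1"
    proof (rule poly_eqI)
      fix i show "Polynomial.coeff g i = Polynomial.coeff 1 i"
      proof (cases i)
        case 0 then show ?thesis using l d by simp
      next
        case (Suc j) then show ?thesis using d by (simp add: coeff_eq_0)
      qed
    qed
  qed
  then have "P = (\<Prod>c\<in>S. [:-c,1:])" using Pg by simp
  then have E: "Polynomial.monom 1 r - 1 = (\<Prod>c\<in>#mset_set S. [:-c,1:])"
    unfolding P_def by (simp only: prod_unfold_prod_mset)
  have one: "(1::'a) \<in> S" using S_iff by simp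
  show ?thesis
  proof (intro exI[of _ "mset_set S"] conjI)
    show "size (mset_set S) = r" using cardS by simp
    show "1 \<in># mset_set S" using finS one by simp
    show "Polynomial.monom 1 r - 1 = (\<Prod>c\<in>#mset_set S. [:-c,1:])" by (fact E)
  qed
qed

lemma main_ind:
  fixes p n :: nat
  assumes "CHAR('a::{field,finite}) = p" "n \<ge> 1"
    "\<forall>r. prime r \<and> r dvd n \<longrightarrow> r dvd p * (card (UNIV::'a set) - 1)"
  shows "Fq_practical TYPE('a) n"
  using assms(2,3)
proof (induction n rule: less_induct)
  case (less n)
  show ?case
  proof (cases "n = 1")
    case True
    then show ?thesis by (simp add: Fq_practical_def)
  next
    case False
    then obtain r where r: "prime r" "r dvd n" using prime_factor_nat by blast
    then obtain n' where nn: "n = r * n'" by (elim dvdE)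
    have r2: "r \<ge> 2" using r by (simp add: prime_ge_2_nat)
    have n'1: "n' \<ge> 1" using nn less.prems by (cases n') auto
    have "n' < n" using nn r2 n'1 by simp
    moreover have "\<forall>r'. prime r' \<and> r' dvd n' \<longrightarrow> r' dvd p * (card (UNIV::'a set) - 1)"
    proof (intro allI impI)
      fix r' assume h: "prime r' \<and> r' dvd n'"
      then have "r' dvd n" using nn by (metis dvd_mult)
      then show "r' dvd p * (card (UNIV::'a set) - 1)" using less.prems h by blast
    qed
    ultimately have IH: "Fq_practical TYPE('a) n'" using less.IH n'1 by blast
    have pp: "prime p" using assms(1) char_prime[where ?'a='a] by simp
    have "r dvd p * (card (UNIV::'a set) - 1)" using less.prems r by blast
    then have "r dvd p \<or> r dvd card (UNIV::'a set) - 1" using r by (simp add: prime_dvd_mult_iff)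
    then obtain M :: "'a multiset" where M: "size M = r" "1 \<in># M"
      "Polynomial.monom 1 r - 1 = (\<Prod>c\<in>#M. [:-c,1:])"
    proof
      assume "r dvd p"
      then have "r = p" using pp r primes_dvd_imp_eq by blast
      then show ?thesis using split_char[of r] assms(1) that by metis
    next
      assume "r dvd card (UNIV::'a set) - 1"
      then show ?thesis using split_dvd[of r] r2 that by auto
    qed
    have "Fq_practical TYPE('a) (r * n')" by (rule step[OF _ M IH]) (use r2 in simp)
    then show ?thesis using nn by simp
  qed
qed

theorem theorem5p5:
  fixes p q m n :: nat
  assumes "card (UNIV :: 'a set) = q"
    and "prime p" and "q = p ^ m"
    and "n \<ge> 2"
    and "\<forall>r. prime r \<and> r dvd n \<longrightarrow> r dvd p * (q - 1)"
  shows "Fq_practical TYPE('a::{field,finite}) n"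
proof -
  have pc: "prime CHAR('a)" by (rule char_prime)
  have "CHAR('a) dvd p ^ m" using CHAR_dvd_CARD[where ?'a='a] assms(1,3) by simp
  then have "CHAR('a) dvd p" using pc prime_dvd_power by blast
  then have "CHAR('a) = p" using assms(2) pc primes_dvd_imp_eq by blast
  then show ?thesis using main_ind[where ?'a='a, of p n] assms by simp
qed

end
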